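(* Let $a,b>0$ and let $f,g:\mathbb{R}\to(0,\infty)$. If both $f(x)$ and $g(x)/f(x)$ are monotonically increasing in $x$, then for any $x_1<x_2$, $$\frac{b+g(x_1)}{a+f(x_1)}\le\frac ba\vee\frac{b+g(x_2)}{a+f(x_2)}.$$ Provided that $\lim_{x\to\infty}(b+g(x))/(a+f(x))$ exists, for any $x_0\in\mathbb{R}$, $$\frac{b+g(x_0)}{a+f(x_0)}\le\frac ba\vee\lim_{x\to\infty}\frac{b+g(x)}{a+f(x)}.$$
   Context: $u\vee v=\max(u,v)$; "monotonically increasing" means non-decreasing. *)

theory Defs
  imports "HOL-Analysis.Analysis"
begin

end

theory Submission
  imports Defs
begin

lemma key:
  fixes a b f1 f2 r1 r2 :: real
  assumes "a > 0" "b > 0" "f1 > 0" "f2 > 0" "r1 > 0" "f1 \<le> f2" "r1 \<le> r2"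
  shows "(b + r1*f1) / (a + f1) \<le> max (b / a) ((b + r2*f2) / (a + f2))"
proof (cases "a * r1 \<le> b")
  case True
  have "(b + r1*f1) / (a + f1) \<le> b / a"
  proof -
    have "a * (r1*f1) \<le> b * f1" using True assms(3) mult_right_mono[OF True, of f1] by (simp add: mult.assoc)
    hence "(b + r1*f1) * a \<le> b * (a + f1)" by (simp add: algebra_simps)
    thus ?thesis using assms by (simp add: pos_divide_le_eq pos_le_divide_eq mult.commute)
  qed
  then show ?thesis by simp
next
  case False
  have "(b + r1*f1) * (a + f2) \<le> (b + r2*f2) * (a + f1)"
  proof -
    have "(b + r1*f1) * (a + f2) \<le> (b + r1*f2) * (a + f1)"
    proof -
      have "(b + r1*f2) * (a + f1) - (b + r1*f1) * (a + f2) = (a*r1 - b) * (f2 - f1)"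
        by (simp add: algebra_simps)
      moreover have "(a*r1 - b) * (f2 - f1) \<ge> 0" using False assms by simp
      ultimately show ?thesis by linarith
    qed
    also have "\<dots> \<le> (b + r2*f2) * (a + f1)"
      using assms by (intro mult_right_mono) (auto intro: mult_right_mono)
    finally show ?thesis .
  qed
  hence "(b + r1*f1) / (a + f1) \<le> (b + r2*f2) / (a + f2)"
    using assms by (simp add: pos_divide_le_eq pos_le_divide_eq mult.commute)
  then show ?thesis by simp
qed

theorem lemma11:
  fixes a b :: real and f g :: "real \<Rightarrow> real"
  assumes "a > 0" and "b > 0"
    and "\<And>x. f x > 0" and "\<And>x. g x > 0"
    and "mono f" and "mono (\<lambda>x. g x / f x)"
  shows "(\<forall>x1 x2. x1 < x2 \<longrightarrow>
            (b + g x1) / (a + f x1) \<le> max (b / a) ((b + g x2) / (a + f x2)))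
       \<and> (\<forall>L. ((\<lambda>x. (b + g x) / (a + f x)) \<longlongrightarrow> L) at_top \<longrightarrow>
            (\<forall>x0. (b + g x0) / (a + f x0) \<le> max (b / a) L))"
proof -
  have P1: "(b + g x1) / (a + f x1) \<le> max (b / a) ((b + g x2) / (a + f x2))"
    if "x1 \<le> x2" for x1 x2
  proof -
    have e: "g x = (g x / f x) * f x" for x using assms(3)[of x] by simp
    have "f x1 \<le> f x2" using assms(5) that by (simp add: mono_def)
    moreover have "g x1 / f x1 \<le> g x2 / f x2" using assms(6) that by (simp add: mono_def)
    ultimately have "(b + (g x1 / f x1) * f x1) / (a + f x1) \<le> max (b / a) ((b + (g x2 / f x2) * f x2) / (a + f x2))"
      using assms(1-4) by (intro key) auto
    then show ?thesis using e[of x1] e[of x2] by simp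
  qed
  have P2: "(b + g x0) / (a + f x0) \<le> max (b / a) L"
    if lim: "((\<lambda>x. (b + g x) / (a + f x)) \<longlongrightarrow> L) at_top" for L x0
  proof (cases "(b + g x0) / (a + f x0) \<le> b / a")
    case True then show ?thesis by simp
  next
    case False
    have "eventually (\<lambda>x. (b + g x0) / (a + f x0) \<le> (b + g x) / (a + f x)) at_top"
      using eventually_ge_at_top[of x0]
    proof (rule eventually_mono)
      fix x assume "x0 \<le> x"
      from P1[OF this] False show "(b + g x0) / (a + f x0) \<le> (b + g x) / (a + f x)" by simp
    qed
    hence "(b + g x0) / (a + f x0) \<le> L"
      by (intro tendsto_lowerbound[OF lim]) auto
    then show ?thesis by simp
  qed
  show ?thesis using P1 P2 by auto
qed

end
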